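(* Let $\Sigma^*$ be an $n\times n$ positive definite matrix with $\Omega^*=(\Sigma^* )^{-1}$ whose conditional independence structure is a tree $T^*$, let $\mathcal{L}$ be the set of leaves of $T^*$, let $D^*$ be a diagonal matrix with nonnegative entries satisfying $D^*_{aa}<1/\Omega^*_{aa}$ for all $a\in\mathcal{L}$, and let $\Sigma^o=\Sigma^*+D^*$. Then for every decomposition $\Sigma^o=\Sigma'+D'$ in which $\Sigma'$ is positive definite with conditional independence structure a tree $T'$, and $D'$ is diagonal with nonnegative entries satisfying $D'_{aa}<1/\Omega^*_{aa}$ for all $a\in\mathcal{L}$, we have $T'=T^*$.
   Context: For an $n\times n$ positive definite matrix $\Sigma$ with inverse $\Omega$, its conditional independence structure is the graph on $\{1,\dots,n\}$ with an edge $\{i,j\}$ ($i\neq j$) iff $\Omega_{ij}\neq 0$. *)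

theory Defs
  imports "HOL-Analysis.Analysis"
begin

text \<open>Matrices are n x n real matrices indexed by a finite type 'n (vertex set {1..n} = UNIV).\<close>

definition pos_def :: "real^'n^'n \<Rightarrow> bool" where
  "pos_def A \<longleftrightarrow> transpose A = A \<and> (\<forall>x::real^'n. x \<noteq> 0 \<longrightarrow> x \<bullet> (A *v x) > 0)"

definition diag_mat :: "real^'n^'n \<Rightarrow> bool" where
  "diag_mat D \<longleftrightarrow> (\<forall>i j. i \<noteq> j \<longrightarrow> D $ i $ j = 0)"

definition ci_graph :: "real^'n^'n \<Rightarrow> 'n \<Rightarrow> 'n \<Rightarrow> bool" where
  "ci_graph S i j \<longleftrightarrow> i \<noteq> j \<and> matrix_inv S $ i $ j \<noteq> 0"

definition connected_graph :: "('a::finite \<Rightarrow> 'a \<Rightarrow> bool) \<Rightarrow> bool" where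
  "connected_graph E \<longleftrightarrow> (\<forall>u v. E\<^sup>*\<^sup>* u v)"

definition has_cycle :: "('a \<Rightarrow> 'a \<Rightarrow> bool) \<Rightarrow> bool" where
  "has_cycle E \<longleftrightarrow> (\<exists>vs. length vs \<ge> 3 \<and> distinct vs \<and>
      (\<forall>k. Suc k < length vs \<longrightarrow> E (vs ! k) (vs ! Suc k)) \<and> E (last vs) (hd vs))"

definition is_tree :: "('a::finite \<Rightarrow> 'a \<Rightarrow> bool) \<Rightarrow> bool" where
  "is_tree E \<longleftrightarrow> connected_graph E \<and> \<not> has_cycle E"

definition leaves :: "('a::finite \<Rightarrow> 'a \<Rightarrow> bool) \<Rightarrow> 'a set" where
  "leaves E = {a. card {b. E a b} = 1}"

end

theory Submission
  imports Defs
begin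

lemma sum_two:
  fixes f :: "'a::finite \<Rightarrow> real"
  assumes "j \<noteq> b" "\<And>y. y \<noteq> j \<Longrightarrow> y \<noteq> b \<Longrightarrow> f y = 0"
  shows "sum f UNIV = f j + f b"
proof -
  have "sum f UNIV = sum f {j,b}"
    by (rule sum.mono_neutral_right) (use assms in auto)
  then show ?thesis using assms by simp
qed

lemma sum_one:
  fixes f :: "'a::finite \<Rightarrow> real"
  assumes "\<And>y. y \<noteq> j \<Longrightarrow> f y = 0"
  shows "sum f UNIV = f j"
proof -
  have "sum f UNIV = sum f {j}"
    by (rule sum.mono_neutral_right) (use assms in auto)
  then show ?thesis by simp
qed

lemma pd_sym: "pos_def S \<Longrightarrow> S $ i $ j = S $ j $ i"
  unfolding pos_def_def by (metis transpose_def vec_lambda_beta)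

lemma pd_quad_zero:
  fixes M :: "real^'n^'n"
  assumes "pos_def M" "\<And>x. v $ x = 0 \<or> (M *v v) $ x = 0"
  shows "v = 0"
proof (rule ccontr)
  assume "v \<noteq> 0"
  then have "v \<bullet> (M *v v) > 0" using assms(1) unfolding pos_def_def by blast
  moreover have "v \<bullet> (M *v v) = 0"
    unfolding inner_vec_def by (rule sum.neutral) (use assms(2) in auto)
  ultimately show False by simp
qed

lemma pd_inv:
  fixes S :: "real^'n^'n"
  assumes "pos_def S"
  shows "S ** matrix_inv S = mat 1" "matrix_inv S ** S = mat 1"
proof -
  have "\<forall>x. S *v x = 0 \<longrightarrow> x = 0"
  proof (intro allI impI)
    fix x assume "S *v x = 0"
    show "x = 0"
      by (rule pd_quad_zero[OF assms]) (simp add: \<open>S *v x = 0\<close>)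
  qed
  then have "invertible S" using matrix_left_invertible_ker invertible_left_inverse by blast
  then have "\<exists>A'. S ** A' = mat 1 \<and> A' ** S = mat 1" unfolding invertible_def by blast
  then have "S ** matrix_inv S = mat 1 \<and> matrix_inv S ** S = mat 1"
    unfolding matrix_inv_def by (rule someI_ex)
  then show "S ** matrix_inv S = mat 1" "matrix_inv S ** S = mat 1" by auto
qed

lemma pd_inv_pd:
  fixes S :: "real^'n^'n"
  assumes "pos_def S"
  shows "pos_def (matrix_inv S)"
proof -
  let ?O = "matrix_inv S"
  have tS: "transpose S = S" using assms unfolding pos_def_def by blast
  have "transpose ?O ** S = mat 1"
    by (metis matrix_transpose_mul pd_inv(1)[OF assms] tS transpose_mat)
  then have "transpose ?O = ?O"
    by (metis matrix_mul_assoc matrix_mul_lid matrix_mul_rid pd_inv(1)[OF assms])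
  moreover have "x \<bullet> (?O *v x) > 0" if "x \<noteq> 0" for x
  proof -
    define y where "y = ?O *v x"
    have Sy: "S *v y = x" unfolding y_def
      by (simp add: matrix_vector_mul_assoc pd_inv(1)[OF assms])
    then have "y \<noteq> 0" using that by auto
    then have "y \<bullet> (S *v y) > 0" using assms unfolding pos_def_def by blast
    then show ?thesis using Sy y_def by (simp add: inner_commute)
  qed
  ultimately show ?thesis unfolding pos_def_def by blast
qed

lemma pd_quad2:
  fixes S :: "real^'n^'n"
  assumes "i \<noteq> j"
  shows "(\<chi> y. if y = i then a else if y = j then b else 0) \<bullet> (S *v (\<chi> y. if y = i then a else if y = j then b else 0))
     = a*a*S$i$i + a*b*S$i$j + b*a*S$j$i + b*b*S$j$j"
proof -
  let ?x = "(\<chi> y. if y = i then a else if y = j then b else 0) :: real^'n"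
  have r: "(S *v ?x) $ y = S$y$i * a + S$y$j * b" for y
    unfolding matrix_vector_mult_def using assms by (subst sum_two[of i j]) auto
  show ?thesis unfolding inner_vec_def using assms
    by (subst sum_two[of i j]) (auto simp: r algebra_simps)
qed

lemma pd_diag:
  fixes S :: "real^'n^'n"
  assumes "pos_def S"
  shows "S $ i $ i > 0"
proof -
  let ?x = "(\<chi> y. if y = i then 1 else 0) :: real^'n"
  have "?x $ i = 1" by simp
  then have "?x \<noteq> 0" by (metis zero_index zero_neq_one)
  then have "?x \<bullet> (S *v ?x) > 0" using assms unfolding pos_def_def by blast
  moreover have "(S *v ?x) $ y = S$y$i" for y
    unfolding matrix_vector_mult_def by (subst sum_one[of i]) auto
  moreover have "?x \<bullet> (S *v ?x) = (S *v ?x) $ i"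
    unfolding inner_vec_def by (subst sum_one[of i]) auto
  ultimately show ?thesis by simp
qed

lemma pd_offdiag:
  fixes S :: "real^'n^'n"
  assumes "pos_def S" "i \<noteq> j"
  shows "(S $ i $ j)^2 < S$i$i * S$j$j"
proof -
  let ?x = "(\<chi> y. if y = i then S$j$j else if y = j then - S$i$j else 0) :: real^'n"
  have "S$j$j > 0" using pd_diag[OF assms(1)] .
  have "?x $ i = S$j$j" by simp
  then have "?x \<noteq> 0" using \<open>S$j$j > 0\<close> by (metis less_irrefl zero_index)
  then have "?x \<bullet> (S *v ?x) > 0" using assms unfolding pos_def_def by blast
  then have "S$j$j*S$j$j*S$i$i - S$j$j*S$i$j*S$i$j - S$i$j*S$j$j*S$j$i + S$i$j*S$i$j*S$j$j > 0"
    using pd_quad2[OF assms(2), where a="S$j$j" and b="- S$i$j" and S=S] by simp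
  then have "S$j$j * (S$i$i*S$j$j - (S$i$j)^2) > 0"
    using pd_sym[OF assms(1), of j i] by (simp add: algebra_simps power2_eq_square)
  then show ?thesis using \<open>S$j$j > 0\<close> by (simp add: zero_less_mult_iff)
qed

definition avoid :: "('a \<Rightarrow> 'a \<Rightarrow> bool) \<Rightarrow> 'a \<Rightarrow> 'a \<Rightarrow> 'a \<Rightarrow> bool" where
  "avoid E j x y \<longleftrightarrow> E x y \<and> x \<noteq> j \<and> y \<noteq> j"

definition rem_edge :: "('a \<Rightarrow> 'a \<Rightarrow> bool) \<Rightarrow> 'a \<Rightarrow> 'a \<Rightarrow> 'a \<Rightarrow> 'a \<Rightarrow> bool" where
  "rem_edge E a b x y \<longleftrightarrow> E x y \<and> \<not> ((x = a \<and> y = b) \<or> (x = b \<and> y = a))"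

definition betw :: "('a \<Rightarrow> 'a \<Rightarrow> bool) \<Rightarrow> 'a \<Rightarrow> 'a \<Rightarrow> 'a \<Rightarrow> bool" where
  "betw E i j k \<longleftrightarrow> i \<noteq> j \<and> k \<noteq> j \<and> \<not> (avoid E j)\<^sup>*\<^sup>* i k"

definition symr :: "('a \<Rightarrow> 'a \<Rightarrow> bool) \<Rightarrow> bool" where
  "symr E \<longleftrightarrow> (\<forall>x y. E x y \<longrightarrow> E y x) \<and> (\<forall>x. \<not> E x x)"

lemma rtranclp_sym:
  assumes "\<And>x y. R x y \<Longrightarrow> R y x" "R\<^sup>*\<^sup>* x y"
  shows "R\<^sup>*\<^sup>* y x"
  using assms(2)
proof (induction rule: rtranclp_induct)
  case base then show ?case by simp
next
  case (step y z)
  then show ?case using assms(1) by (meson converse_rtranclp_into_rtranclp)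
qed

lemma rtranclp_mono':
  assumes "\<And>x y. R x y \<Longrightarrow> Q x y" "R\<^sup>*\<^sup>* x y"
  shows "Q\<^sup>*\<^sup>* x y"
  using assms(2) by (induction rule: rtranclp_induct) (auto intro: rtranclp.rtrancl_into_rtrancl assms(1))

lemma avoid_sym: "symr E \<Longrightarrow> (avoid E j)\<^sup>*\<^sup>* x y \<Longrightarrow> (avoid E j)\<^sup>*\<^sup>* y x"
  by (rule rtranclp_sym) (auto simp: avoid_def symr_def)

lemma rem_sym: "symr E \<Longrightarrow> (rem_edge E a b)\<^sup>*\<^sup>* x y \<Longrightarrow> (rem_edge E a b)\<^sup>*\<^sup>* y x"
  by (rule rtranclp_sym) (auto simp: rem_edge_def symr_def)

lemma distinct_path:
  assumes "R\<^sup>*\<^sup>* x y"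
  shows "\<exists>vs. vs \<noteq> [] \<and> hd vs = x \<and> last vs = y \<and> distinct vs \<and>
            (\<forall>k. Suc k < length vs \<longrightarrow> R (vs ! k) (vs ! Suc k))"
  using assms
proof (induction rule: converse_rtranclp_induct)
  case base
  then show ?case by (intro exI[of _ "[y]"]) simp
next
  case (step x z)
  then obtain vs where vs: "vs \<noteq> []" "hd vs = z" "last vs = y" "distinct vs"
     "\<forall>k. Suc k < length vs \<longrightarrow> R (vs ! k) (vs ! Suc k)" by blast
  show ?case
  proof (cases "x \<in> set vs")
    case False
    show ?thesis
    proof (intro exI[of _ "x # vs"] conjI allI impI)
      fix k assume "Suc k < length (x # vs)"
      then show "R ((x # vs) ! k) ((x # vs) ! Suc k)"
        using vs step(1) by (cases k) (auto simp: hd_conv_nth)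
    qed (use vs False in auto)
  next
    case True
    then obtain p where p: "p < length vs" "vs ! p = x" by (auto simp: in_set_conv_nth)
    show ?thesis
    proof (intro exI[of _ "drop p vs"] conjI allI impI)
      fix k assume "Suc k < length (drop p vs)"
      then show "R (drop p vs ! k) (drop p vs ! Suc k)"
        using vs(5)[rule_format, of "p + k"] p by auto
    qed (use vs p in \<open>auto simp: hd_drop_conv_nth\<close>)
  qed
qed

lemma bridge:
  assumes "symr E" "\<not> has_cycle E" "E a b"
  shows "\<not> (rem_edge E a b)\<^sup>*\<^sup>* a b"
proof
  assume "(rem_edge E a b)\<^sup>*\<^sup>* a b"
  from distinct_path[OF this] obtain vs where vs: "vs \<noteq> []" "hd vs = a" "last vs = b" "distinct vs"
     "\<forall>k. Suc k < length vs \<longrightarrow> rem_edge E a b (vs ! k) (vs ! Suc k)" by blast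
  have ab: "a \<noteq> b" using assms(1,3) unfolding symr_def by blast
  have "length vs \<noteq> 1" using vs ab by (cases vs) auto
  moreover have "length vs \<noteq> 2"
  proof
    assume "length vs = 2"
    then have "vs ! 0 = a" "vs ! 1 = b" using vs by (auto simp: hd_conv_nth last_conv_nth)
    then show False using vs(5)[rule_format, of 0] \<open>length vs = 2\<close> by (auto simp: rem_edge_def)
  qed
  moreover have "length vs \<noteq> 0" using vs by simp
  ultimately have "length vs \<ge> 3" by linarith
  moreover have "E (last vs) (hd vs)" using vs assms(1,3) by (auto simp: symr_def)
  moreover have "\<forall>k. Suc k < length vs \<longrightarrow> E (vs ! k) (vs ! Suc k)" using vs(5) by (auto simp: rem_edge_def)
  ultimately have "has_cycle E" unfolding has_cycle_def using vs(4) by (intro exI[of _ vs]) simp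
  then show False using assms(2) by blast
qed

lemma avoid_neq: "(avoid E j)\<^sup>*\<^sup>* i x \<Longrightarrow> i \<noteq> j \<Longrightarrow> x \<noteq> j"
  by (induction rule: rtranclp_induct) (auto simp: avoid_def)

lemma first_hit:
  assumes "E\<^sup>*\<^sup>* i x" "i \<noteq> j"
  shows "(avoid E j)\<^sup>*\<^sup>* i x \<or> (\<exists>m. (avoid E j)\<^sup>*\<^sup>* i m \<and> E m j)"
  using assms(1)
proof (induction rule: rtranclp_induct)
  case base then show ?case by simp
next
  case (step x y)
  show ?case
  proof (cases "(avoid E j)\<^sup>*\<^sup>* i x")
    case True
    have "x \<noteq> j" using avoid_neq[OF True assms(2)] .
    show ?thesis
    proof (cases "y = j")
      case True
      then show ?thesis using \<open>(avoid E j)\<^sup>*\<^sup>* i x\<close> step(2) by blast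
    next
      case False
      then have "avoid E j x y" using \<open>x \<noteq> j\<close> step(2) by (simp add: avoid_def)
      then show ?thesis using \<open>(avoid E j)\<^sup>*\<^sup>* i x\<close> by (meson rtranclp.rtrancl_into_rtrancl)
    qed
  next
    case False
    then show ?thesis using step(3) by blast
  qed
qed

lemma nbr_toward:
  assumes "connected_graph E" "i \<noteq> j"
  shows "\<exists>m. (avoid E j)\<^sup>*\<^sup>* i m \<and> E m j"
proof -
  have "E\<^sup>*\<^sup>* i j" using assms(1) unfolding connected_graph_def by blast
  from first_hit[OF this assms(2)] show ?thesis using avoid_neq[of E j i j] assms(2) by blast
qed

definition tree' :: "('a::finite \<Rightarrow> 'a \<Rightarrow> bool) \<Rightarrow> bool" where
  "tree' E \<longleftrightarrow> symr E \<and> is_tree E"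

lemma leaf_sep:
  assumes "\<And>y. E j y \<Longrightarrow> y = b" "(avoid E b)\<^sup>*\<^sup>* j x"
  shows "x = j"
  using assms(2) by (induction rule: rtranclp_induct) (use assms(1) in \<open>auto simp: avoid_def\<close>)

lemma leaf_betw:
  assumes "\<And>y. E j y \<Longrightarrow> y = b" "j \<noteq> b" "x \<noteq> j" "x \<noteq> b"
  shows "betw E j b x"
  using leaf_sep[OF assms(1)] assms(2-4) unfolding betw_def by blast

lemma two_nbr_betw:
  assumes "tree' E" "E j a" "E j c" "a \<noteq> c"
  shows "betw E a j c"
proof -
  have s: "symr E" and nc: "\<not> has_cycle E" using assms(1) by (auto simp: tree'_def is_tree_def)
  have "a \<noteq> j" "c \<noteq> j" using s assms by (auto simp: symr_def)
  moreover have "\<not> (avoid E j)\<^sup>*\<^sup>* a c"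
  proof
    assume "(avoid E j)\<^sup>*\<^sup>* a c"
    then have "(rem_edge E a j)\<^sup>*\<^sup>* a c" by (rule rtranclp_mono'[rotated]) (auto simp: avoid_def rem_edge_def)
    moreover have "rem_edge E a j c j" using assms s \<open>c \<noteq> j\<close> by (auto simp: rem_edge_def symr_def)
    ultimately have "(rem_edge E a j)\<^sup>*\<^sup>* a j" by (meson rtranclp.rtrancl_into_rtrancl)
    moreover have "E a j" using assms s by (auto simp: symr_def)
    ultimately show False using bridge[OF s nc] by blast
  qed
  ultimately show ?thesis unfolding betw_def by blast
qed

lemma betw_internal:
  assumes "tree' E" "betw E i j k"
  shows "\<exists>a c. a \<noteq> c \<and> E j a \<and> E j c"
proof -
  have s: "symr E" and cg: "connected_graph E" using assms(1) by (auto simp: tree'_def is_tree_def)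
  have ij: "i \<noteq> j" "k \<noteq> j" and nk: "\<not> (avoid E j)\<^sup>*\<^sup>* i k" using assms(2) by (auto simp: betw_def)
  obtain m1 where m1: "(avoid E j)\<^sup>*\<^sup>* i m1" "E m1 j" using nbr_toward[OF cg ij(1)] by blast
  obtain m2 where m2: "(avoid E j)\<^sup>*\<^sup>* k m2" "E m2 j" using nbr_toward[OF cg ij(2)] by blast
  have "m1 \<noteq> m2"
  proof
    assume "m1 = m2"
    then have "(avoid E j)\<^sup>*\<^sup>* m1 k" using avoid_sym[OF s m2(1)] by simp
    then show False using m1(1) nk by (meson rtranclp_trans)
  qed
  then show ?thesis using m1 m2 s by (auto simp: symr_def)
qed

lemma nonadj_betw:
  assumes "tree' E" "i \<noteq> k" "\<not> E i k"
  shows "\<exists>c. betw E i c k \<and> E i c \<and> (avoid E i)\<^sup>*\<^sup>* k c"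
proof -
  have s: "symr E" and cg: "connected_graph E" and nc: "\<not> has_cycle E"
    using assms(1) by (auto simp: tree'_def is_tree_def)
  obtain m where m: "(avoid E i)\<^sup>*\<^sup>* k m" "E m i" using nbr_toward[OF cg, of k i] assms(2) by metis
  have "m \<noteq> k" using m assms(3) s by (auto simp: symr_def)
  have "m \<noteq> i" using m s by (auto simp: symr_def)
  have "\<not> (avoid E m)\<^sup>*\<^sup>* i k"
  proof
    assume "(avoid E m)\<^sup>*\<^sup>* i k"
    then have "(rem_edge E i m)\<^sup>*\<^sup>* i k" by (rule rtranclp_mono'[rotated]) (auto simp: avoid_def rem_edge_def)
    moreover have "(rem_edge E i m)\<^sup>*\<^sup>* k m" using m(1) by (rule rtranclp_mono'[rotated]) (auto simp: avoid_def rem_edge_def)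
    ultimately have "(rem_edge E i m)\<^sup>*\<^sup>* i m" by (meson rtranclp_trans)
    moreover have "E i m" using m s by (auto simp: symr_def)
    ultimately show False using bridge[OF s nc] by blast
  qed
  then have "betw E i m k" using \<open>m \<noteq> k\<close> \<open>m \<noteq> i\<close> by (auto simp: betw_def)
  then show ?thesis using m s by (auto simp: symr_def)
qed

lemma edge_char:
  assumes "tree' E"
  shows "E i k \<longleftrightarrow> i \<noteq> k \<and> (\<forall>j. \<not> betw E i j k)"
proof
  assume "E i k"
  then have "i \<noteq> k" using assms by (auto simp: tree'_def symr_def)
  moreover have "\<not> betw E i j k" for j
    using \<open>E i k\<close> by (auto simp: betw_def avoid_def)
  ultimately show "i \<noteq> k \<and> (\<forall>j. \<not> betw E i j k)" by blast
next
  assume "i \<noteq> k \<and> (\<forall>j. \<not> betw E i j k)"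
  then show "E i k" using nonadj_betw[OF assms] by blast
qed

lemma side_nbr:
  assumes "tree' E" "i \<noteq> j" "(avoid E j)\<^sup>*\<^sup>* i k"
  shows "\<exists>m. (avoid E j)\<^sup>*\<^sup>* i m \<and> E m j \<and> m \<noteq> j \<and>
     (\<forall>x. (avoid E j)\<^sup>*\<^sup>* i x \<longrightarrow> x \<noteq> m \<longrightarrow> betw E j m x) \<and>
     (i \<noteq> m \<longrightarrow> {x. (avoid E m)\<^sup>*\<^sup>* i x} \<subset> {x. (avoid E j)\<^sup>*\<^sup>* i x})"
proof -
  have s: "symr E" and cg: "connected_graph E" and nc: "\<not> has_cycle E"
    using assms(1) by (auto simp: tree'_def is_tree_def)
  obtain m where m: "(avoid E j)\<^sup>*\<^sup>* i m" "E m j" using nbr_toward[OF cg assms(2)] by blast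
  have mj: "m \<noteq> j" using m s by (auto simp: symr_def)
  have sep: "betw E j m x" if x: "(avoid E j)\<^sup>*\<^sup>* i x" "x \<noteq> m" for x
  proof -
    have "\<not> (avoid E m)\<^sup>*\<^sup>* j x"
    proof
      assume "(avoid E m)\<^sup>*\<^sup>* j x"
      then have "(rem_edge E j m)\<^sup>*\<^sup>* j x" by (rule rtranclp_mono'[rotated]) (auto simp: avoid_def rem_edge_def)
      moreover have "(avoid E j)\<^sup>*\<^sup>* x m" using avoid_sym[OF s x(1)] m(1) by (meson rtranclp_trans)
      then have "(rem_edge E j m)\<^sup>*\<^sup>* x m" by (rule rtranclp_mono'[rotated]) (auto simp: avoid_def rem_edge_def)
      ultimately have "(rem_edge E j m)\<^sup>*\<^sup>* j m" by (meson rtranclp_trans)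
      moreover have "E j m" using m s by (auto simp: symr_def)
      ultimately show False using bridge[OF s nc] by blast
    qed
    then show ?thesis using x mj by (auto simp: betw_def)
  qed
  have sub: "(avoid E j)\<^sup>*\<^sup>* i x" if "(avoid E m)\<^sup>*\<^sup>* i x" for x
    using that
  proof (induction rule: rtranclp_induct)
    case base then show ?case by simp
  next
    case (step y z)
    have yj: "y \<noteq> j" using avoid_neq[OF step(3) assms(2)] .
    show ?case
    proof (cases "z = j")
      case True
      then have "E y j" "y \<noteq> m" using step(2) by (auto simp: avoid_def)
      then have "betw E j m y" using sep step(3) by blast
      moreover have "avoid E m j y" using \<open>E y j\<close> \<open>y \<noteq> m\<close> mj s by (auto simp: avoid_def symr_def)
      ultimately show ?thesis by (auto simp: betw_def)
    next
      case False
      then have "avoid E j y z" using step(2) yj by (auto simp: avoid_def)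
      then show ?thesis using step(3) by (meson rtranclp.rtrancl_into_rtrancl)
    qed
  qed
  have "i \<noteq> m \<longrightarrow> m \<notin> {x. (avoid E m)\<^sup>*\<^sup>* i x}" using avoid_neq[of E m i m] by blast
  then have "i \<noteq> m \<longrightarrow> {x. (avoid E m)\<^sup>*\<^sup>* i x} \<subset> {x. (avoid E j)\<^sup>*\<^sup>* i x}" using sub m(1) by blast
  then show ?thesis using m mj sep by blast
qed

lemma ci_symr:
  fixes S :: "real^'n^'n"
  assumes "pos_def S" shows "symr (ci_graph S)"
  using pd_sym[OF pd_inv_pd[OF assms]] unfolding symr_def ci_graph_def by metis

lemma mv_basis:
  fixes S :: "real^'n^'n"
  shows "(S *v (\<chi> y. if y = k then 1 else 0)) $ x = S$x$k"
  unfolding matrix_vector_mult_def by (subst sum_one[of k]) auto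

lemma sep_gen:
  fixes S :: "real^'n^'n"
  assumes pd: "pos_def S" and A: "j \<notin> A" "k \<notin> A" "i \<in> A"
    and cl: "\<forall>x\<in>A. \<forall>y. y \<notin> A \<longrightarrow> y \<noteq> j \<longrightarrow> matrix_inv S $ x $ y = 0"
  shows "S$i$k * S$j$j = S$i$j * S$j$k"
proof -
  let ?O = "matrix_inv S"
  define ek :: "real^'n" where "ek = (\<chi> y. if y = k then 1 else 0)"
  define ej :: "real^'n" where "ej = (\<chi> y. if y = j then 1 else 0)"
  define c :: "real^'n" where "c = S$j$j *\<^sub>R ek - S$j$k *\<^sub>R ej"
  define w where "w = S *v c"
  have wx: "w $ x = S$x$k * S$j$j - S$x$j * S$j$k" for x
    unfolding w_def c_def ek_def ej_def
    by (simp add: matrix_vector_mult_diff_distrib matrix_vector_mult_scaleR mv_basis mult.commute)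
  have Ow: "?O *v w = c" unfolding w_def
    by (simp add: matrix_vector_mul_assoc pd_inv(2)[OF pd])
  define v :: "real^'n" where "v = (\<chi> x. if x \<in> A then w $ x else 0)"
  have "(?O *v v) $ x = 0" if xA: "x \<in> A" for x
  proof -
    have "(?O *v v) $ x = (\<Sum>y\<in>UNIV. ?O$x$y * v$y)" by (simp add: matrix_vector_mult_def)
    also have "\<dots> = (\<Sum>y\<in>UNIV. ?O$x$y * w$y)"
    proof (rule sum.cong)
      fix y
      show "?O$x$y * v$y = ?O$x$y * w$y"
      proof (cases "y \<in> A")
        case False
        show ?thesis
        proof (cases "y = j")
          case True then show ?thesis using False by (simp add: v_def wx)
        next
          case False2: False
          then show ?thesis using False cl xA by (simp add: v_def)
        qed
      qed (simp add: v_def)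
    qed simp
    also have "\<dots> = (?O *v w) $ x" by (simp add: matrix_vector_mult_def)
    also have "\<dots> = 0" using Ow xA A by (auto simp: c_def ek_def ej_def)
    finally show ?thesis .
  qed
  then have "\<forall>x. v $ x = 0 \<or> (?O *v v) $ x = 0" by (auto simp: v_def)
  then have "v = 0" using pd_quad_zero[OF pd_inv_pd[OF pd], of v] by blast
  moreover have "v $ i = w $ i" using A(3) by (simp add: v_def)
  ultimately have "w $ i = 0" by simp
  then show ?thesis using wx[of i] by (simp add: mult.commute)
qed

lemma omega_zero:
  fixes S :: "real^'n^'n"
  assumes pd: "pos_def S" and A: "b \<notin> A" "a \<in> A"
    and cl: "\<forall>x\<in>A. \<forall>y. y \<notin> A \<longrightarrow> S $ x $ y = 0"
  shows "matrix_inv S $ a $ b = 0"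
proof -
  let ?O = "matrix_inv S"
  define e :: "real^'n" where "e = (\<chi> y. if y = b then 1 else 0)"
  define u where "u = ?O *v e"
  have ux: "u $ x = ?O $ x $ b" for x
    unfolding u_def e_def by (rule mv_basis)
  have Su: "S *v u = e" unfolding u_def
    by (simp add: matrix_vector_mul_assoc pd_inv(1)[OF pd])
  define v :: "real^'n" where "v = (\<chi> x. if x \<in> A then u $ x else 0)"
  have "(S *v v) $ x = 0" if xA: "x \<in> A" for x
  proof -
    have "(S *v v) $ x = (\<Sum>y\<in>UNIV. S$x$y * v$y)" by (simp add: matrix_vector_mult_def)
    also have "\<dots> = (\<Sum>y\<in>UNIV. S$x$y * u$y)"
      by (rule sum.cong) (use cl xA in \<open>auto simp: v_def\<close>)
    also have "\<dots> = (S *v u) $ x" by (simp add: matrix_vector_mult_def)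
    also have "\<dots> = 0" using Su xA A by (auto simp: e_def)
    finally show ?thesis .
  qed
  then have "\<forall>x. v $ x = 0 \<or> (S *v v) $ x = 0" by (auto simp: v_def)
  then have "v = 0" using pd_quad_zero[OF pd, of v] by blast
  moreover have "v $ a = u $ a" using A(2) by (simp add: v_def)
  ultimately have "u $ a = 0" by simp
  then show ?thesis using ux by simp
qed

lemma sep_betw:
  fixes S :: "real^'n^'n"
  assumes pd: "pos_def S" and b: "betw (ci_graph S) i j k"
  shows "S$i$k * S$j$j = S$i$j * S$j$k"
proof -
  let ?E = "ci_graph S"
  let ?A = "{x. (avoid ?E j)\<^sup>*\<^sup>* i x}"
  have ij: "i \<noteq> j" and nk: "\<not> (avoid ?E j)\<^sup>*\<^sup>* i k" using b by (auto simp: betw_def)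
  have h1: "j \<notin> ?A" using avoid_neq[of ?E j i j] ij by auto
  have h2: "k \<notin> ?A" using nk by simp
  have h3: "i \<in> ?A" by simp
  have h4: "\<forall>x\<in>?A. \<forall>y. y \<notin> ?A \<longrightarrow> y \<noteq> j \<longrightarrow> matrix_inv S $ x $ y = 0"
  proof (intro ballI allI impI)
    fix x y assume x: "x \<in> ?A" and y: "y \<notin> ?A" "y \<noteq> j"
    show "matrix_inv S $ x $ y = 0"
    proof (rule ccontr)
      assume "matrix_inv S $ x $ y \<noteq> 0"
      moreover have "x \<noteq> y" using x y by blast
      moreover have "x \<noteq> j" using x avoid_neq[of ?E j i x] ij by blast
      ultimately have "avoid ?E j x y" using y by (simp add: avoid_def ci_graph_def)
      then have "y \<in> ?A" using x by (simp add: rtranclp.rtrancl_into_rtrancl)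
      then show False using y by blast
    qed
  qed
  show ?thesis by (rule sep_gen[OF pd h1 h2 h3 h4])
qed

lemma edge_nz:
  fixes S :: "real^'n^'n"
  assumes pd: "pos_def S" and nc: "\<not> has_cycle (ci_graph S)" and e: "ci_graph S a b"
  shows "S$a$b \<noteq> 0"
proof
  assume z: "S$a$b = 0"
  let ?E = "ci_graph S"
  let ?R = "rem_edge ?E a b"
  let ?A = "{x. ?R\<^sup>*\<^sup>* a x}"
  let ?C = "{x. ?R\<^sup>*\<^sup>* b x}"
  have s: "symr ?E" by (rule ci_symr[OF pd])
  have nab: "\<not> ?R\<^sup>*\<^sup>* a b" by (rule bridge[OF s nc e])
  have ab: "a \<noteq> b" using e by (simp add: ci_graph_def)
  have bA: "b \<notin> ?A" using nab by simp
  have aA: "a \<in> ?A" by simp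
  have bC: "b \<in> ?C" by simp
  have aC: "a \<notin> ?C" using nab rem_sym[OF s, of a b b a] by auto
  have disj: "x \<notin> ?C" if "x \<in> ?A" for x
  proof
    assume "x \<in> ?C"
    then have "?R\<^sup>*\<^sup>* x b" using rem_sym[OF s] by auto
    then show False using that nab by (auto intro: rtranclp_trans)
  qed
  have clA: "\<forall>x\<in>?A. \<forall>y. y \<notin> ?A \<longrightarrow> y \<noteq> b \<longrightarrow> matrix_inv S $ x $ y = 0"
  proof (intro ballI allI impI)
    fix x y assume x: "x \<in> ?A" and y: "y \<notin> ?A" "y \<noteq> b"
    show "matrix_inv S $ x $ y = 0"
    proof (rule ccontr)
      assume "matrix_inv S $ x $ y \<noteq> 0"
      moreover have "x \<noteq> y" using x y by auto
      moreover have "y \<noteq> a" using y aA by auto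
      ultimately have "?R x y" using y by (auto simp: rem_edge_def ci_graph_def)
      then have "y \<in> ?A" using x by (simp add: rtranclp.rtrancl_into_rtrancl)
      then show False using y by auto
    qed
  qed
  have clC: "\<forall>x\<in>?C. \<forall>y. y \<notin> ?C \<longrightarrow> y \<noteq> a \<longrightarrow> matrix_inv S $ x $ y = 0"
  proof (intro ballI allI impI)
    fix x y assume x: "x \<in> ?C" and y: "y \<notin> ?C" "y \<noteq> a"
    show "matrix_inv S $ x $ y = 0"
    proof (rule ccontr)
      assume "matrix_inv S $ x $ y \<noteq> 0"
      moreover have "x \<noteq> y" using x y by auto
      moreover have "y \<noteq> b" using y bC by auto
      ultimately have "?R x y" using y by (auto simp: rem_edge_def ci_graph_def)
      then have "y \<in> ?C" using x by (simp add: rtranclp.rtrancl_into_rtrancl)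
      then show False using y by auto
    qed
  qed
  have Sxb: "S$x$b = 0" if x: "x \<in> ?A" for x
  proof (cases "x = a")
    case True then show ?thesis using z by simp
  next
    case False
    have "x \<notin> ?C" using disj x .
    from sep_gen[OF pd aC this bC clC]
    have "S$b$x * S$a$a = S$b$a * S$a$x" .
    moreover have "S$b$a = 0" using z pd_sym[OF pd, of b a] by simp
    moreover have "S$a$a > 0" by (rule pd_diag[OF pd])
    ultimately have "S$b$x = 0" by simp
    then show ?thesis using pd_sym[OF pd, of b x] by simp
  qed
  have Sxy: "\<forall>x\<in>?A. \<forall>y. y \<notin> ?A \<longrightarrow> S $ x $ y = 0"
  proof (intro ballI allI impI)
    fix x y assume x: "x \<in> ?A" and y: "y \<notin> ?A"
    show "S$x$y = 0"
    proof (cases "y = b")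
      case True then show ?thesis using Sxb x by simp
    next
      case False
      from sep_gen[OF pd bA y x clA]
      have "S$x$y * S$b$b = S$x$b * S$b$y" .
      moreover have "S$b$b > 0" by (rule pd_diag[OF pd])
      ultimately show ?thesis using Sxb[OF x] by simp
    qed
  qed
  have "matrix_inv S $ a $ b = 0" by (rule omega_zero[OF pd bA aA Sxy])
  then show False using e by (simp add: ci_graph_def)
qed

lemma nz:
  fixes S :: "real^'n^'n"
  assumes pd: "pos_def S" and t: "tree' (ci_graph S)"
  shows "S$i$k \<noteq> 0"
proof -
  let ?E = "ci_graph S"
  have s: "symr ?E" and nc: "\<not> has_cycle ?E" using t by (auto simp: tree'_def is_tree_def)
  have "\<forall>i. card {x. (avoid ?E i)\<^sup>*\<^sup>* k x} = N \<longrightarrow> S$i$k \<noteq> 0" for N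
  proof (induction N rule: less_induct)
    case (less N)
    show ?case
    proof (intro allI impI)
      fix i assume N: "card {x. (avoid ?E i)\<^sup>*\<^sup>* k x} = N"
      show "S$i$k \<noteq> 0"
      proof (cases "i = k")
        case True then show ?thesis using pd_diag[OF pd, of i] by simp
      next
        case ik: False
        show ?thesis
        proof (cases "?E i k")
          case True then show ?thesis using edge_nz[OF pd nc] by blast
        next
          case False
          obtain c where c: "betw ?E i c k" "?E i c" "(avoid ?E i)\<^sup>*\<^sup>* k c"
            using nonadj_betw[OF t ik False] by blast
          have ck: "c \<noteq> k" and ci: "c \<noteq> i" and nik: "\<not> (avoid ?E c)\<^sup>*\<^sup>* i k"
            using c(1) by (auto simp: betw_def)
          have sub: "(avoid ?E i)\<^sup>*\<^sup>* k x" if "(avoid ?E c)\<^sup>*\<^sup>* k x" for x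
            using that
          proof (induction rule: rtranclp_induct)
            case base then show ?case by simp
          next
            case (step y z)
            have yi: "y \<noteq> i" using avoid_neq[OF step(3)] ik by auto
            have zi: "z \<noteq> i"
            proof
              assume "z = i"
              then have "(avoid ?E c)\<^sup>*\<^sup>* k i" using step(1,2) by (simp add: rtranclp.rtrancl_into_rtrancl)
              then have "(avoid ?E c)\<^sup>*\<^sup>* i k" using avoid_sym[OF s] by blast
              then show False using nik by simp
            qed
            have "avoid ?E i y z" using step(2) yi zi by (auto simp: avoid_def)
            then show ?case using step(3) by (simp add: rtranclp.rtrancl_into_rtrancl)
          qed
          have cnot: "c \<notin> {x. (avoid ?E c)\<^sup>*\<^sup>* k x}" using avoid_neq[of ?E c k c] ck by auto
          have "{x. (avoid ?E c)\<^sup>*\<^sup>* k x} \<subset> {x. (avoid ?E i)\<^sup>*\<^sup>* k x}"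
            using sub cnot c(3) by auto
          then have "card {x. (avoid ?E c)\<^sup>*\<^sup>* k x} < N" using N psubset_card_mono[OF finite] by metis
          then have "S$c$k \<noteq> 0" using less by blast
          moreover have "S$i$c \<noteq> 0" using edge_nz[OF pd nc c(2)] .
          moreover have "S$i$k * S$c$c = S$i$c * S$c$k" by (rule sep_betw[OF pd c(1)])
          ultimately show ?thesis by auto
        qed
      qed
    qed
  qed
  then show ?thesis by blast
qed

lemma arith_W:
  fixes a b p q mm jm jj r :: real
  assumes "mm > 0" "a*mm = jm*p" "b*mm = jm*q" "\<bar>p*q\<bar> \<le> mm*r" "jm^2 \<le> jj*mm" "r \<ge> 0"
  shows "\<bar>a*b\<bar> \<le> jj*r"
proof -
  have "\<bar>a*b\<bar>*(mm*mm) = \<bar>a*mm\<bar>*\<bar>b*mm\<bar>" using assms(1) by (simp add: abs_mult algebra_simps)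
  also have "\<dots> = jm^2 * \<bar>p*q\<bar>" using assms(2,3) by (simp add: abs_mult power2_eq_square)
  also have "\<dots> \<le> jm^2 * (mm*r)" by (rule mult_left_mono[OF assms(4)]) simp
  also have "\<dots> \<le> (jj*mm)*(mm*r)" by (rule mult_right_mono[OF assms(5)]) (use assms in simp)
  also have "\<dots> = (jj*r)*(mm*mm)" by simp
  finally show ?thesis using assms(1) by (simp add: mult_le_cancel_right_pos)
qed

lemma arith_S:
  fixes a b p q mm jm jj r :: real
  assumes "mm > 0" "a*mm = jm*p" "b*mm = jm*q" "\<bar>p*q\<bar> \<le> mm*r" "jm^2 < jj*mm" "r > 0"
  shows "\<bar>a*b\<bar> < jj*r"
proof -
  have "\<bar>a*b\<bar>*(mm*mm) = \<bar>a*mm\<bar>*\<bar>b*mm\<bar>" using assms(1) by (simp add: abs_mult algebra_simps)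
  also have "\<dots> = jm^2 * \<bar>p*q\<bar>" using assms(2,3) by (simp add: abs_mult power2_eq_square)
  also have "\<dots> \<le> jm^2 * (mm*r)" by (rule mult_left_mono[OF assms(4)]) simp
  also have "\<dots> < (jj*mm)*(mm*r)" by (rule mult_strict_right_mono[OF assms(5)]) (use assms in simp)
  also have "\<dots> = (jj*r)*(mm*mm)" by simp
  finally show ?thesis using assms(1) by (simp add: mult_less_cancel_right_pos)
qed

lemma leaf_formula:
  fixes S :: "real^'n^'n"
  assumes pd: "pos_def S" and jb: "j \<noteq> b" and z: "\<forall>x. x \<noteq> j \<longrightarrow> x \<noteq> b \<longrightarrow> matrix_inv S $ x $ j = 0"
  shows "matrix_inv S $ j $ j * (S$j$j * S$b$b - S$j$b * S$b$j) = S$b$b"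
proof -
  let ?O = "matrix_inv S"
  have M: "(S ** ?O) $ x $ j = (if x = j then 1 else 0)" for x
    using pd_inv(1)[OF pd] by (simp add: mat_def)
  have e: "(S ** ?O) $ x $ j = S$x$j * ?O$j$j + S$x$b * ?O$b$j" for x
  proof -
    have "(S ** ?O) $ x $ j = (\<Sum>y\<in>UNIV. S$x$y * ?O$y$j)" by (simp add: matrix_matrix_mult_def)
    also have "\<dots> = S$x$j * ?O$j$j + S$x$b * ?O$b$j"
      by (rule sum_two[OF jb]) (use z in auto)
    finally show ?thesis .
  qed
  have r1: "S$j$j * ?O$j$j + S$j$b * ?O$b$j = 1" using M[of j] e[of j] by simp
  have r2: "S$b$j * ?O$j$j + S$b$b * ?O$b$j = 0" using M[of b] e[of b] jb by simp
  show ?thesis using r1 r2 by algebra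
qed


lemma W_gen:
  fixes S :: "real^'n^'n"
  assumes pd: "pos_def S" and t: "tree' (ci_graph S)"
  shows "\<bar>S$i$j * S$j$k\<bar> \<le> S$j$j * \<bar>S$i$k\<bar>"
proof -
  let ?E = "ci_graph S"
  have "\<forall>i j. card {x. (avoid ?E j)\<^sup>*\<^sup>* i x} = N \<longrightarrow> \<bar>S$i$j * S$j$k\<bar> \<le> S$j$j * \<bar>S$i$k\<bar>" for N
  proof (induction N rule: less_induct)
    case (less N)
    show ?case
    proof (intro allI impI)
      fix i j assume N: "card {x. (avoid ?E j)\<^sup>*\<^sup>* i x} = N"
      have jj: "S$j$j > 0" by (rule pd_diag[OF pd])
      show "\<bar>S$i$j * S$j$k\<bar> \<le> S$j$j * \<bar>S$i$k\<bar>"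
      proof (cases "i = j")
        case True then show ?thesis using jj by (simp add: abs_mult)
      next
        case ij: False
        show ?thesis
        proof (cases "k = j")
          case True then show ?thesis using jj by (simp add: abs_mult mult.commute)
        next
          case kj: False
          show ?thesis
          proof (cases "i = k")
            case True
            have "(S$i$j)^2 < S$i$i * S$j$j" by (rule pd_offdiag[OF pd ij])
            moreover have "S$j$i = S$i$j" by (rule pd_sym[OF pd])
            moreover have "S$i$i > 0" by (rule pd_diag[OF pd])
            ultimately show ?thesis using True by (simp add: abs_mult power2_eq_square mult.commute)
          next
            case ik: False
            show ?thesis
            proof (cases "betw ?E i j k")
              case True
              have "S$i$k * S$j$j = S$i$j * S$j$k" by (rule sep_betw[OF pd True])
              then have "\<bar>S$i$j * S$j$k\<bar> = \<bar>S$i$k\<bar> * S$j$j" by (metis abs_mult abs_of_pos jj)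
              then show ?thesis by (simp add: mult.commute)
            next
              case False
              then have K: "(avoid ?E j)\<^sup>*\<^sup>* i k" using ij kj by (simp add: betw_def)
              obtain m where m: "(avoid ?E j)\<^sup>*\<^sup>* i m" "?E m j" "m \<noteq> j"
                and sepm: "\<forall>x. (avoid ?E j)\<^sup>*\<^sup>* i x \<longrightarrow> x \<noteq> m \<longrightarrow> betw ?E j m x"
                and ps: "i \<noteq> m \<longrightarrow> {x. (avoid ?E m)\<^sup>*\<^sup>* i x} \<subset> {x. (avoid ?E j)\<^sup>*\<^sup>* i x}"
                using side_nbr[OF t ij K] by blast
              have key: "S$j$x * S$m$m = S$j$m * S$m$x" if "(avoid ?E j)\<^sup>*\<^sup>* i x" for x
              proof (cases "x = m")
                case True then show ?thesis by (simp add: mult.commute)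
              next
                case False
                then show ?thesis using sep_betw[OF pd] sepm that by blast
              qed
              have Wm: "\<bar>S$i$m * S$m$k\<bar> \<le> S$m$m * \<bar>S$i$k\<bar>"
              proof (cases "i = m")
                case True then show ?thesis using pd_diag[OF pd, of m] by (simp add: abs_mult)
              next
                case False
                then have "card {x. (avoid ?E m)\<^sup>*\<^sup>* i x} < N" using N ps psubset_card_mono[OF finite] by metis
                then show ?thesis using less by blast
              qed
              have "S$i$m = S$m$i" by (rule pd_sym[OF pd])
              then have Wm': "\<bar>S$m$i * S$m$k\<bar> \<le> S$m$m * \<bar>S$i$k\<bar>" using Wm by simp
              have jm: "(S$j$m)^2 \<le> S$j$j * S$m$m" using pd_offdiag[OF pd, of j m] m(3) by simp
              have "\<bar>S$j$i * S$j$k\<bar> \<le> S$j$j * \<bar>S$i$k\<bar>"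
                by (rule arith_W[where jm="S$j$m" and mm="S$m$m"])
                   (use pd_diag[OF pd, of m] key[of i] key[OF K] Wm' jm in auto)
              moreover have "S$j$i = S$i$j" by (rule pd_sym[OF pd])
              ultimately show ?thesis by simp
            qed
          qed
        qed
      qed
    qed
  qed
  then show ?thesis by blast
qed

lemma S_gen:
  fixes S :: "real^'n^'n"
  assumes pd: "pos_def S" and t: "tree' (ci_graph S)"
    and d: "i \<noteq> j" "k \<noteq> j" "\<not> betw (ci_graph S) i j k"
  shows "\<bar>S$i$j * S$j$k\<bar> < S$j$j * \<bar>S$i$k\<bar>"
proof -
  let ?E = "ci_graph S"
  have K: "(avoid ?E j)\<^sup>*\<^sup>* i k" using d by (simp add: betw_def)
  obtain m where m: "(avoid ?E j)\<^sup>*\<^sup>* i m" "?E m j" "m \<noteq> j"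
    and sepm: "\<forall>x. (avoid ?E j)\<^sup>*\<^sup>* i x \<longrightarrow> x \<noteq> m \<longrightarrow> betw ?E j m x"
    using side_nbr[OF t d(1) K] by blast
  have key: "S$j$x * S$m$m = S$j$m * S$m$x" if "(avoid ?E j)\<^sup>*\<^sup>* i x" for x
  proof (cases "x = m")
    case True then show ?thesis by (simp add: mult.commute)
  next
    case False
    then show ?thesis using sep_betw[OF pd] sepm that by blast
  qed
  have Wm: "\<bar>S$m$i * S$m$k\<bar> \<le> S$m$m * \<bar>S$i$k\<bar>"
    using W_gen[OF pd t, of i m k] pd_sym[OF pd, of i m] by simp
  have jm: "(S$j$m)^2 < S$j$j * S$m$m" using pd_offdiag[OF pd, of j m] m(3) by simp
  have "\<bar>S$j$i * S$j$k\<bar> < S$j$j * \<bar>S$i$k\<bar>"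
    by (rule arith_S[where jm="S$j$m" and mm="S$m$m"])
       (use pd_diag[OF pd, of m] key[of i] key[OF K] Wm jm nz[OF pd t, of i k] in auto)
  moreover have "S$j$i = S$i$j" by (rule pd_sym[OF pd])
  ultimately show ?thesis by simp
qed

lemma le_diag:
  fixes S1 S2 :: "real^'n^'n"
  assumes pd1: "pos_def S1" and pd2: "pos_def S2" and t1: "tree' (ci_graph S1)" and t2: "tree' (ci_graph S2)"
    and off: "\<forall>x y. x \<noteq> y \<longrightarrow> S2$x$y = S1$x$y"
    and e: "ci_graph S1 j a" "ci_graph S1 j c" "a \<noteq> c"
  shows "S1$j$j \<le> S2$j$j"
proof -
  have b: "betw (ci_graph S1) a j c" by (rule two_nbr_betw[OF t1 e])
  have aj: "a \<noteq> j" "c \<noteq> j" using e by (auto simp: ci_graph_def)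
  have eq: "S1$a$c * S1$j$j = S1$a$j * S1$j$c" by (rule sep_betw[OF pd1 b])
  have w: "\<bar>S2$a$j * S2$j$c\<bar> \<le> S2$j$j * \<bar>S2$a$c\<bar>" by (rule W_gen[OF pd2 t2])
  then have w': "\<bar>S1$a$j * S1$j$c\<bar> \<le> S2$j$j * \<bar>S1$a$c\<bar>" using off aj e(3) by simp
  have nz1: "S1$a$c \<noteq> 0" by (rule nz[OF pd1 t1])
  have jj: "S1$j$j > 0" by (rule pd_diag[OF pd1])
  have "\<bar>S1$a$j * S1$j$c\<bar> = S1$j$j * \<bar>S1$a$c\<bar>" using eq[symmetric] jj by (simp add: abs_mult mult.commute)
  then have "S1$j$j * \<bar>S1$a$c\<bar> \<le> S2$j$j * \<bar>S1$a$c\<bar>" using w' by simp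
  then show ?thesis using nz1 by (simp add: mult_le_cancel_right)
qed

lemma betw_transfer:
  fixes S1 S2 :: "real^'n^'n"
  assumes pd1: "pos_def S1" and pd2: "pos_def S2" and t1: "tree' (ci_graph S1)" and t2: "tree' (ci_graph S2)"
    and off: "\<forall>x y. x \<noteq> y \<longrightarrow> S2$x$y = S1$x$y"
    and jj: "S1$j$j = S2$j$j" and b: "betw (ci_graph S1) i j k"
  shows "betw (ci_graph S2) i j k"
proof (rule ccontr)
  assume nb: "\<not> betw (ci_graph S2) i j k"
  have ij: "i \<noteq> j" "k \<noteq> j" using b by (auto simp: betw_def)
  have ik: "i \<noteq> k" using b by (auto simp: betw_def)
  have "\<bar>S2$i$j * S2$j$k\<bar> < S2$j$j * \<bar>S2$i$k\<bar>" by (rule S_gen[OF pd2 t2 ij nb])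
  then have lt: "\<bar>S1$i$j * S1$j$k\<bar> < S1$j$j * \<bar>S1$i$k\<bar>" using off ij ik jj by simp
  have eq: "S1$i$k * S1$j$j = S1$i$j * S1$j$k" by (rule sep_betw[OF pd1 b])
  have "S1$j$j > 0" by (rule pd_diag[OF pd1])
  then have "\<bar>S1$i$j * S1$j$k\<bar> = S1$j$j * \<bar>S1$i$k\<bar>" using eq[symmetric] by (simp add: abs_mult mult.commute)
  then show False using lt by simp
qed

lemma leaf_not_internal:
  fixes S S' :: "real^'n^'n"
  assumes pd: "pos_def S" and pd': "pos_def S'" and t: "tree' (ci_graph S)" and t': "tree' (ci_graph S')"
    and off: "\<forall>x y. x \<noteq> y \<longrightarrow> S'$x$y = S$x$y"
    and leaf: "{x. ci_graph S j x} = {b}"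
    and dd: "S$j$j - S'$j$j \<le> d" and dl: "d < 1 / matrix_inv S $ j $ j"
    and e: "ci_graph S' j a" "ci_graph S' j c" "a \<noteq> c"
  shows False
proof -
  let ?E = "ci_graph S" and ?O = "matrix_inv S"
  have s: "symr ?E" by (rule ci_symr[OF pd])
  have Ejb: "?E j b" using leaf by blast
  have jb: "j \<noteq> b" using Ejb by (simp add: ci_graph_def)
  have onlyb: "\<And>y. ?E j y \<Longrightarrow> y = b" using leaf by blast
  have z: "\<forall>x. x \<noteq> j \<longrightarrow> x \<noteq> b \<longrightarrow> ?O $ x $ j = 0"
  proof (intro allI impI)
    fix x assume x: "x \<noteq> j" "x \<noteq> b"
    show "?O $ x $ j = 0"
    proof (rule ccontr)
      assume "?O $ x $ j \<noteq> 0"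
      then have "?E x j" using x by (simp add: ci_graph_def)
      then have "?E j x" using s by (auto simp: symr_def)
      then show False using onlyb x by blast
    qed
  qed
  have lf: "?O $ j $ j * (S$j$j * S$b$b - S$j$b * S$b$j) = S$b$b" by (rule leaf_formula[OF pd jb z])
  have bF: "betw (ci_graph S') a j c" by (rule two_nbr_betw[OF t' e])
  have aj: "a \<noteq> j" "c \<noteq> j" using e by (auto simp: ci_graph_def)
  have eq': "S'$a$c * S'$j$j = S'$a$j * S'$j$c" by (rule sep_betw[OF pd' bF])
  then have eq: "S$a$c * S'$j$j = S$a$j * S$j$c" using off aj e(3) by simp
  have key: "S$j$x * S$b$b = S$j$b * S$b$x" if "x \<noteq> j" for x
  proof (cases "x = b")
    case True then show ?thesis by (simp add: mult.commute)
  next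
    case False
    have "betw ?E j b x" by (rule leaf_betw[OF onlyb jb that False])
    then show ?thesis by (rule sep_betw[OF pd])
  qed
  have bb: "S$b$b > 0" by (rule pd_diag[OF pd])
  have Wb: "\<bar>S$b$a * S$b$c\<bar> \<le> S$b$b * \<bar>S$a$c\<bar>"
    using W_gen[OF pd t, of a b c] pd_sym[OF pd, of a b] by simp
  have "\<bar>S$j$a * S$j$c\<bar> \<le> ((S$j$b)^2 / S$b$b) * \<bar>S$a$c\<bar>"
    by (rule arith_W[where jm="S$j$b" and mm="S$b$b"]) (use bb key[of a] key[of c] aj Wb in auto)
  moreover have "S$j$a = S$a$j" by (rule pd_sym[OF pd])
  ultimately have "\<bar>S$a$c * S'$j$j\<bar> \<le> ((S$j$b)^2 / S$b$b) * \<bar>S$a$c\<bar>" using eq by simp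
  then have "\<bar>S$a$c\<bar> * \<bar>S'$j$j\<bar> \<le> \<bar>S$a$c\<bar> * ((S$j$b)^2 / S$b$b)" by (simp add: abs_mult mult.commute)
  moreover have "\<bar>S$a$c\<bar> > 0" using nz[OF pd t, of a c] by simp
  ultimately have "\<bar>S'$j$j\<bar> \<le> (S$j$b)^2 / S$b$b" by (rule mult_left_le_imp_le)
  then have s'j: "S'$j$j \<le> (S$j$b)^2 / S$b$b" by simp
  have Ojj: "?O $ j $ j > 0" by (rule pd_diag[OF pd_inv_pd[OF pd]])
  have sym: "S$b$j = S$j$b" by (rule pd_sym[OF pd])
  have "1 / ?O $ j $ j = S$j$j - (S$j$b)^2 / S$b$b"
  proof -
    have "?O $ j $ j * (S$j$j - (S$j$b)^2 / S$b$b) = 1"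
      using lf bb sym by (simp add: field_simps power2_eq_square)
    then show ?thesis using Ojj by (simp add: field_simps)
  qed
  then show False using dd dl s'j by linarith
qed

lemma has_nbr:
  assumes "connected_graph E" "w \<noteq> j"
  shows "\<exists>b. E j b"
proof -
  have "E\<^sup>*\<^sup>* j w" using assms(1) by (simp add: connected_graph_def)
  then show ?thesis using assms(2) by (cases rule: converse_rtranclpE) auto
qed


definition intl :: "('a \<Rightarrow> 'a \<Rightarrow> bool) \<Rightarrow> 'a \<Rightarrow> bool" where
  "intl G j \<longleftrightarrow> (\<exists>a c. a \<noteq> c \<and> G j a \<and> G j c)"

theorem theorem3:
  fixes S_star D_star S' D' :: "real^'n^'n"
  assumes pd_star: "pos_def S_star"
    and tree_star: "is_tree (ci_graph S_star)"
    and D_star_diag: "diag_mat D_star"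
    and D_star_nonneg: "\<forall>i. D_star $ i $ i \<ge> 0"
    and D_star_leaf: "\<forall>a \<in> leaves (ci_graph S_star). D_star $ a $ a < 1 / (matrix_inv S_star $ a $ a)"
    and pd': "pos_def S'"
    and tree': "is_tree (ci_graph S')"
    and D'_diag: "diag_mat D'"
    and D'_nonneg: "\<forall>i. D' $ i $ i \<ge> 0"
    and D'_leaf: "\<forall>a \<in> leaves (ci_graph S_star). D' $ a $ a < 1 / (matrix_inv S_star $ a $ a)"
    and decomp: "S_star + D_star = S' + D'"
  shows "ci_graph S' = ci_graph S_star"
proof -
  let ?S = S_star
  let ?E = "ci_graph S_star" and ?F = "ci_graph S'"
  have tE: "tree' ?E" using tree_star ci_symr[OF pd_star] by (simp add: tree'_def)
  have tF: "tree' ?F" using tree' ci_symr[OF pd'] by (simp add: tree'_def)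
  have sE: "symr ?E" and sF: "symr ?F" using tE tF by (auto simp: tree'_def)
  have cE: "connected_graph ?E" and cF: "connected_graph ?F"
    using tree_star tree' by (auto simp: is_tree_def)
  have dec: "?S$x$y + D_star$x$y = S'$x$y + D'$x$y" for x y
    using arg_cong[OF decomp, of "\<lambda>M. M$x$y"] by simp
  have off: "\<forall>x y. x \<noteq> y \<longrightarrow> S'$x$y = ?S$x$y"
  proof (intro allI impI)
    fix x y :: 'n assume "x \<noteq> y"
    then have "D_star$x$y = 0" "D'$x$y = 0" using D_star_diag D'_diag by (auto simp: diag_mat_def)
    then show "S'$x$y = ?S$x$y" using dec[of x y] by simp
  qed
  have off2: "\<forall>x y. x \<noteq> y \<longrightarrow> ?S$x$y = S'$x$y" using off by metis
  show ?thesis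
  proof (cases "\<forall>x y::'n. x = y")
    case True
    then show ?thesis by (auto simp: ci_graph_def fun_eq_iff)
  next
    case False
    have nbr: "\<exists>w. w \<noteq> j" for j :: 'n using False by metis
    have FE: "intl ?E j" if hF: "intl ?F j" for j
    proof (rule ccontr)
      assume ni: "\<not> intl ?E j"
      obtain a c where ac: "a \<noteq> c" "?F j a" "?F j c" using hF by (auto simp: intl_def)
      obtain b where b: "?E j b" using has_nbr[OF cE] nbr by metis
      have "{x. ?E j x} = {b}" using ni b by (auto simp: intl_def)
      then have lv: "j \<in> leaves ?E" by (simp add: leaves_def)
      have dd: "?S$j$j - S'$j$j \<le> D'$j$j" using dec[of j j] D_star_nonneg by smt
      show False
        by (rule leaf_not_internal[OF pd_star pd' tE tF off \<open>{x. ?E j x} = {b}\<close> dd _ ac(2,3,1)])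
           (use D'_leaf lv in blast)
    qed
    have diag_eq: "?S$j$j = S'$j$j" if h1: "intl ?E j" and h2: "intl ?F j" for j
    proof -
      obtain a c where ac: "a \<noteq> c" "?E j a" "?E j c" using h1 by (auto simp: intl_def)
      obtain a' c' where ac': "a' \<noteq> c'" "?F j a'" "?F j c'" using h2 by (auto simp: intl_def)
      have "?S$j$j \<le> S'$j$j" by (rule le_diag[OF pd_star pd' tE tF off ac(2,3,1)])
      moreover have "S'$j$j \<le> ?S$j$j" by (rule le_diag[OF pd' pd_star tF tE off2 ac'(2,3,1)])
      ultimately show ?thesis by simp
    qed
    have EF: "intl ?F j" if ie: "intl ?E j" for j
    proof (rule ccontr)
      assume ni: "\<not> intl ?F j"
      obtain a1 a2 where a: "a1 \<noteq> a2" "?E j a1" "?E j a2" using ie by (auto simp: intl_def)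
      obtain c where c: "?F j c" using has_nbr[OF cF] nbr by metis
      have onlyc: "\<And>y. ?F j y \<Longrightarrow> y = c" using ni c by (auto simp: intl_def)
      have jc: "j \<noteq> c" using c by (simp add: ci_graph_def)
      have ic: "intl ?F c"
      proof (rule ccontr)
        assume nic: "\<not> intl ?F c"
        have cj: "?F c j" using c sF by (auto simp: symr_def)
        have onlyj: "\<And>y. ?F c y \<Longrightarrow> y = j" using nic cj by (auto simp: intl_def)
        have reach: "x = j \<or> x = c" if "?F\<^sup>*\<^sup>* j x" for x
          using that by (induction rule: rtranclp_induct) (use onlyc onlyj in blast)+
        have "a1 \<noteq> j" "a2 \<noteq> j" using a by (auto simp: ci_graph_def)
        then obtain x where x: "x \<noteq> j" "x \<noteq> c" using a(1) by metis
        have "?F\<^sup>*\<^sup>* j x" using cF by (simp add: connected_graph_def)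
        then show False using reach x by blast
      qed
      have iEc: "intl ?E c" using FE[OF ic] .
      have dc: "S'$c$c = ?S$c$c" using diag_eq[OF iEc ic] by simp
      obtain a where aa: "?E j a" "a \<noteq> c" using a by metis
      have aj: "a \<noteq> j" using aa by (auto simp: ci_graph_def)
      have "betw ?F j c a" by (rule leaf_betw[OF onlyc jc aj aa(2)])
      then have "betw ?E j c a" by (rule betw_transfer[OF pd' pd_star tF tE off2 dc])
      moreover have "avoid ?E c j a" using aa jc by (auto simp: avoid_def)
      ultimately show False by (auto simp: betw_def)
    qed
    have bw: "betw ?E i j k \<longleftrightarrow> betw ?F i j k" for i j k
    proof
      assume b: "betw ?E i j k"
      have "intl ?E j" using betw_internal[OF tE b] by (auto simp: intl_def)
      then have "?S$j$j = S'$j$j" using diag_eq EF by blast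
      then show "betw ?F i j k" by (rule betw_transfer[OF pd_star pd' tE tF off _ b])
    next
      assume b: "betw ?F i j k"
      have "intl ?F j" using betw_internal[OF tF b] by (auto simp: intl_def)
      then have "?S$j$j = S'$j$j" using diag_eq FE by blast
      then show "betw ?E i j k" by (rule betw_transfer[OF pd' pd_star tF tE off2 _ b, OF sym])
    qed
    show ?thesis
    proof (intro ext)
      fix i k
      show "?F i k = ?E i k" using edge_char[OF tE, of i k] edge_char[OF tF, of i k] bw by auto
    qed
  qed
qed

end
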